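(* Let $E$ be a real Hilbert space with $\dim(E)\ge2$, $h\in E$ a unit vector, and $f:\mathbb{R}_{\ge0}\to\mathbb{R}_{\ge0}$ with $f(d)=0$ iff $d=0$. Let $x\preceq_f y\iff f(\|y_\perp-x_\perp\|)\le y_h-x_h$, and assume $(E,\preceq_f)$ is a sponge. Then the following are equivalent: (1) the relation $\preceq_f$ is topologically closed in $E\times E$; (2) $f$ is lower semicontinuous; (3) $f$ is ascending (non-decreasing); (4) $f$ is increasing (strictly increasing); (5) $f$ is superadditive. If $\dim(E)\ge3$, all of these properties hold.
   Context: For $x\in E$ write $x=x_h h+x_\perp$ with $x_h=(x,h)$ and $x_\perp$ orthogonal to $h$. An oriented set $(S,\preceq)$ (with $\preceq$ reflexive and antisymmetric) is a sponge if every finite, nonempty, right-bounded subset has a join and every finite, nonempty, left-bounded subset has a meet. Here $P$ is right-bounded if some $s$ has $p\preceq s$ for all $p\in P$; the join of $P$ is an $x$ with $p\preceq x$ for all $p\in P$ and $x\preceq y$ whenever $p\preceq y$ for all $p\in P$; left-bounded and meet are dual. $f$ is superadditive if $f(x+y)\ge f(x)+f(y)$ for all $x,y\ge0$. *)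

theory Defs
  imports "HOL-Analysis.Analysis"
begin

definition is_join :: "('a \<Rightarrow> 'a \<Rightarrow> bool) \<Rightarrow> 'a set \<Rightarrow> 'a \<Rightarrow> bool" where
  "is_join le P x \<longleftrightarrow> (\<forall>p\<in>P. le p x) \<and> (\<forall>y. (\<forall>p\<in>P. le p y) \<longrightarrow> le x y)"

definition is_meet :: "('a \<Rightarrow> 'a \<Rightarrow> bool) \<Rightarrow> 'a set \<Rightarrow> 'a \<Rightarrow> bool" where
  "is_meet le P x \<longleftrightarrow> (\<forall>p\<in>P. le x p) \<and> (\<forall>y. (\<forall>p\<in>P. le y p) \<longrightarrow> le y x)"

definition sponge :: "('a \<Rightarrow> 'a \<Rightarrow> bool) \<Rightarrow> bool" where
  "sponge le \<longleftrightarrow>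
     (\<forall>x. le x x) \<and> (\<forall>x y. le x y \<and> le y x \<longrightarrow> x = y) \<and>
     (\<forall>P. finite P \<and> P \<noteq> {} \<and> (\<exists>s. \<forall>p\<in>P. le p s) \<longrightarrow> (\<exists>x. is_join le P x)) \<and>
     (\<forall>P. finite P \<and> P \<noteq> {} \<and> (\<exists>s. \<forall>p\<in>P. le s p) \<longrightarrow> (\<exists>x. is_meet le P x))"

text \<open>x = x_h h + x_perp with x_h = (x,h).\<close>
definition hcomp :: "'a::real_inner \<Rightarrow> 'a \<Rightarrow> real" where
  "hcomp h x = inner x h"

definition perp :: "'a::real_inner \<Rightarrow> 'a \<Rightarrow> 'a" where
  "perp h x = x - inner x h *\<^sub>R h"

definition cone_rel :: "(real \<Rightarrow> real) \<Rightarrow> 'a::real_inner \<Rightarrow> 'a \<Rightarrow> 'a \<Rightarrow> bool" where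
  "cone_rel f h x y \<longleftrightarrow> f (norm (perp h y - perp h x)) \<le> hcomp h y - hcomp h x"

definition lsc_on :: "real set \<Rightarrow> (real \<Rightarrow> real) \<Rightarrow> bool" where
  "lsc_on S f \<longleftrightarrow> (\<forall>x\<in>S. \<forall>c. c < f x \<longrightarrow> (\<forall>\<^sub>F y in at x within S. c < f y))"

definition superadditive_on :: "real set \<Rightarrow> (real \<Rightarrow> real) \<Rightarrow> bool" where
  "superadditive_on S f \<longleftrightarrow> (\<forall>x\<in>S. \<forall>y\<in>S. f (x + y) \<ge> f x + f y)"

text \<open>dim(E) \<ge> n, valid also for infinite-dimensional spaces.\<close>
definition dim_at_least :: "nat \<Rightarrow> 'a::real_vector itself \<Rightarrow> bool" where
  "dim_at_least n _ \<longleftrightarrow> (\<exists>S::'a set. finite S \<and> card S = n \<and> independent S)"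

end

theory Submission
  imports Defs
begin


lemma kernel_nontriv:
  fixes L :: "'a::real_vector \<Rightarrow> 'b::euclidean_space"
  assumes lin: "linear L" and ind: "independent S" and fin: "finite S" and c: "card S > DIM('b)"
  shows "\<exists>v\<in>span S. v \<noteq> 0 \<and> L v = 0"
proof (rule ccontr)
  assume "\<not> ?thesis"
  hence k: "\<And>v. v \<in> span S \<Longrightarrow> L v = 0 \<Longrightarrow> v = 0" by blast
  have inj: "inj_on L (span S)"
  proof (rule inj_onI)
    fix x y assume "x \<in> span S" "y \<in> span S" "L x = L y"
    hence "x - y \<in> span S" "L (x - y) = 0" by (auto simp: span_diff linear_diff[OF lin])
    thus "x = y" using k[of "x - y"] by auto
  qed
  have "independent (L ` S)"
    by (rule linear_independent_injective_image[OF lin ind inj])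
  hence "card (L ` S) \<le> DIM('b)" using independent_bound by blast
  moreover have "card (L ` S) = card S"
    using inj by (meson card_image inj_on_subset span_superset)
  ultimately show False using c by simp
qed




lemma orth1:
  fixes h :: "'a::real_inner"
  assumes "dim_at_least 2 TYPE('a)"
  shows "\<exists>e. norm e = 1 \<and> inner e h = 0"
proof -
  obtain S :: "'a set" where S: "finite S" "card S = 2" "independent S"
    using assms unfolding dim_at_least_def by blast
  have lin: "linear (\<lambda>v. inner v h)" by (rule linearI) (auto simp: inner_add_left)
  obtain v where "v \<noteq> 0" "inner v h = 0"
    using kernel_nontriv[OF lin S(3) S(1)] S(2) by auto
  thus ?thesis by (intro exI[of _ "v /\<^sub>R norm v"]) auto
qed

lemma orth2:
  fixes h :: "'a::real_inner"
  assumes "dim_at_least 3 TYPE('a)"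
  shows "\<exists>e1 e2. norm e1 = 1 \<and> norm e2 = 1 \<and> inner e1 h = 0 \<and> inner e2 h = 0 \<and> inner e1 e2 = 0"
proof -
  obtain S :: "'a set" where S: "finite S" "card S = 3" "independent S"
    using assms unfolding dim_at_least_def by blast
  have lin: "linear (\<lambda>v. inner v h)" by (rule linearI) (auto simp: inner_add_left)
  obtain v where v: "v \<noteq> 0" "inner v h = 0"
    using kernel_nontriv[OF lin S(3) S(1)] S(2) by auto
  have lin2: "linear (\<lambda>w. (inner w h, inner w v))" 
    by (rule linearI) (auto simp: inner_add_left)
  obtain w where w: "w \<noteq> 0" "inner w h = 0" "inner w v = 0"
    using kernel_nontriv[OF lin2 S(3) S(1)] S(2) by (auto simp: zero_prod_def)
  show ?thesis
    by (intro exI[of _ "v /\<^sub>R norm v"] exI[of _ "w /\<^sub>R norm w"]) (use v w in \<open>auto simp: inner_commute\<close>)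
qed




locale cs =
  fixes h :: "'a::real_inner" and f :: "real \<Rightarrow> real"
  assumes unit: "norm h = 1"
    and f_nonneg: "\<forall>d\<ge>0. f d \<ge> 0"
    and f_zero: "\<forall>d\<ge>0. f d = 0 \<longleftrightarrow> d = 0"
    and spg: "sponge (cone_rel f h)"
begin

abbreviation R where "R \<equiv> cone_rel f h"

lemma hh: "inner h h = 1"
  using unit by (metis norm_eq_1)

lemma hc_mk[simp]: "inner p h = 0 \<Longrightarrow> hcomp h (t *\<^sub>R h + p) = t"
  by (simp add: hcomp_def inner_add_left hh)

lemma perp_mk[simp]: "inner p h = 0 \<Longrightarrow> perp h (t *\<^sub>R h + p) = p"
  by (simp add: perp_def inner_add_left hh)

lemma hc_h[simp]: "hcomp h (t *\<^sub>R h) = t"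
  by (simp add: hcomp_def hh)
lemma perp_h[simp]: "perp h (t *\<^sub>R h) = 0"
  by (simp add: perp_def hh)
lemma hc_0[simp]: "hcomp h 0 = 0" by (simp add: hcomp_def)
lemma perp_0[simp]: "perp h 0 = 0" by (simp add: perp_def)
lemma hc_p[simp]: "inner p h = 0 \<Longrightarrow> hcomp h p = 0" by (simp add: hcomp_def)
lemma perp_p[simp]: "inner p h = 0 \<Longrightarrow> perp h p = p" by (simp add: perp_def)

lemma perp_orth[simp]: "inner (perp h x) h = 0"
  by (simp add: perp_def inner_diff_left hh)

lemma f0[simp]: "f 0 = 0" using f_zero by simp
lemma fnn[simp]: "d \<ge> 0 \<Longrightarrow> f d \<ge> 0" using f_nonneg by simp
lemma fnorm[simp]: "f (norm x) \<ge> 0" by simp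
lemma fpos: "d > 0 \<Longrightarrow> f d > 0" using f_zero f_nonneg by (metis less_eq_real_def less_irrefl)

lemma Rdef: "R x y \<longleftrightarrow> f (norm (perp h y - perp h x)) \<le> hcomp h y - hcomp h x"
  by (simp add: cone_rel_def)

lemma join_ex: "finite P \<Longrightarrow> P \<noteq> {} \<Longrightarrow> (\<forall>p\<in>P. R p s) \<Longrightarrow> \<exists>z. is_join R P z"
  using spg unfolding sponge_def by blast

lemma FA:
  assumes a: "inner a h = 0" and q: "inner q h = 0"
  shows "f (norm a) + f (norm q) \<le> max (f (norm (q - a))) (f (norm (q + a)))"
proof -
  have na: "inner (-a) h = 0" using a by simp
  let ?s = "f (norm a) *\<^sub>R h"
  have ub: "\<forall>p\<in>{a, -a}. R p ?s" using a na by (auto simp: Rdef)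
  obtain z where z: "is_join R {a, -a} z" using join_ex[OF _ _ ub] by blast
  define c where "c = perp h z"
  define t where "t = hcomp h z"
  have zd: "z = t *\<^sub>R h + c" unfolding c_def t_def perp_def hcomp_def by simp
  have c: "inner c h = 0" unfolding c_def by simp
  have z1: "f (norm (c - a)) \<le> t" and z2: "f (norm (c + a)) \<le> t"
    using z a na unfolding is_join_def by (auto simp: Rdef c_def t_def)
  let ?z' = "t *\<^sub>R h - c"
  have "?z' = t *\<^sub>R h + (- c)" by simp
  have hz': "hcomp h ?z' = t" "perp h ?z' = - c"
    using hc_mk[of "-c" t] perp_mk[of "-c" t] c by auto
  have "\<forall>p\<in>{a,-a}. R p ?z'"
    using a na z1 z2 hz' by (auto simp: Rdef norm_minus_commute) (metis add.commute norm_minus_commute minus_diff_eq uminus_add_conv_diff)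
  hence "R z ?z'" using z unfolding is_join_def by blast
  hence "f (norm (- c - c)) \<le> 0" using hz' unfolding Rdef c_def[symmetric] t_def[symmetric] by simp
  hence "f (norm (- c - c)) = 0" using fnorm[of "-c-c"] by linarith
  hence "norm (- c - c) = 0" using f_zero by auto
  moreover have "- c - c = (-2) *\<^sub>R c" by (simp add: algebra_simps scaleR_2)
  ultimately have c0: "c = 0" by simp
  have ta: "f (norm a) \<le> t" using z1 c0 by simp
  define M where "M = max (f (norm (q - a))) (f (norm (q + a)))"
  have "\<forall>p\<in>{a,-a}. R p (M *\<^sub>R h + q)"
    using a na q by (auto simp: Rdef M_def)
  hence "R z (M *\<^sub>R h + q)" using z unfolding is_join_def by blast
  hence "f (norm q) \<le> M - t" using q c0 unfolding Rdef c_def[symmetric] t_def[symmetric] by simp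
  thus ?thesis using ta unfolding M_def by linarith
qed

end



context cs begin

lemma FA_line:
  assumes e: "norm e = 1" "inner e h = 0" and r: "r \<ge> 0" and l: "l \<ge> 0"
  shows "f r + f l \<le> max (f \<bar>l - r\<bar>) (f (l + r))"
proof -
  have i1: "inner (r *\<^sub>R e) h = 0" "inner (l *\<^sub>R e) h = 0" using e by auto
  have "f (norm (r *\<^sub>R e)) + f (norm (l *\<^sub>R e)) \<le> max (f (norm (l *\<^sub>R e - r *\<^sub>R e))) (f (norm (l *\<^sub>R e + r *\<^sub>R e)))"
    by (rule FA[OF i1])
  moreover have "l *\<^sub>R e - r *\<^sub>R e = (l - r) *\<^sub>R e" "l *\<^sub>R e + r *\<^sub>R e = (l + r) *\<^sub>R e"
    by (auto simp: algebra_simps)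
  moreover have "norm (r *\<^sub>R e) = r" "norm (l *\<^sub>R e) = l" "norm ((l - r) *\<^sub>R e) = \<bar>l - r\<bar>"
     "norm ((l + r) *\<^sub>R e) = l + r" using e r l by (auto simp del: scaleR_add_left scaleR_diff_left)
  ultimately show ?thesis using e(1) by simp
qed

lemma doubling:
  assumes e: "norm e = 1" "inner e h = 0" and r: "r \<ge> 0"
  shows "2 * f r \<le> f (2 * r)"
proof -
  have "f r + f r \<le> max (f \<bar>r - r\<bar>) (f (r + r))" by (rule FA_line[OF e r r])
  moreover have "f (r + r) \<ge> 0" using r fnn[of "r + r"] by linarith
  moreover have "\<bar>r - r\<bar> = 0" by simp
  ultimately have "f r + f r \<le> f (r + r)" by (metis f0 max.absorb2)
  thus ?thesis by (metis mult_2)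
qed


lemma FA_orth:
  assumes e: "norm e1 = 1" "norm e2 = 1" "inner e1 h = 0" "inner e2 h = 0" "inner e1 e2 = 0"
    and r: "r \<ge> 0" and u: "u \<ge> 0"
  shows "f r + f u \<le> f (sqrt (r\<^sup>2 + u\<^sup>2))"
proof -
  have i1: "inner (r *\<^sub>R e1) h = 0" "inner (u *\<^sub>R e2) h = 0" using e by auto
  have "f (norm (r *\<^sub>R e1)) + f (norm (u *\<^sub>R e2)) \<le> max (f (norm (u *\<^sub>R e2 - r *\<^sub>R e1))) (f (norm (u *\<^sub>R e2 + r *\<^sub>R e1)))"
    by (rule FA[OF i1])
  moreover have ee: "inner e1 e1 = 1" "inner e2 e2 = 1" using e by (metis norm_eq_1)+
  have "inner (u *\<^sub>R e2 - r *\<^sub>R e1) (u *\<^sub>R e2 - r *\<^sub>R e1) = r\<^sup>2 + u\<^sup>2"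
    using e(5) ee by (simp add: inner_diff_left inner_diff_right inner_commute power2_eq_square)
  hence "norm (u *\<^sub>R e2 - r *\<^sub>R e1) = sqrt (r\<^sup>2 + u\<^sup>2)" by (simp add: norm_eq_sqrt_inner)
  moreover have "inner (u *\<^sub>R e2 + r *\<^sub>R e1) (u *\<^sub>R e2 + r *\<^sub>R e1) = r\<^sup>2 + u\<^sup>2"
    using e(5) ee by (simp add: inner_add_left inner_add_right inner_commute power2_eq_square)
  hence "norm (u *\<^sub>R e2 + r *\<^sub>R e1) = sqrt (r\<^sup>2 + u\<^sup>2)" by (simp add: norm_eq_sqrt_inner)
  moreover have "norm (r *\<^sub>R e1) = r" "norm (u *\<^sub>R e2) = u" using e r u by auto
  ultimately show ?thesis by simp
qed

lemma mono_superadd: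
  assumes e: "norm e = 1" "inner e h = 0" and m: "mono_on {0..} f"
  shows "superadditive_on {0..} f"
  unfolding superadditive_on_def
proof (intro ballI)
  fix x y :: real assume "x \<in> {0..}" "y \<in> {0..}"
  hence x: "x \<ge> 0" and y: "y \<ge> 0" by auto
  have "f \<bar>y - x\<bar> \<le> f (y + x)" using m x y by (intro mono_onD[OF m]) auto
  thus "f x + f y \<le> f (x + y)" using FA_line[OF e x y] by (simp add: add.commute)
qed

lemma superadd_strict:
  assumes s: "superadditive_on {0..} f"
  shows "strict_mono_on {0..} f"
proof (rule strict_mono_onI)
  fix x y :: real assume "x \<in> {0..}" "y \<in> {0..}" "x < y"
  hence xy: "x \<in> {0..}" "y - x \<in> {0..}" "y - x > 0" by auto
  have "f x + f (y - x) \<le> f (x + (y - x))"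
    using s xy(1,2) unfolding superadditive_on_def by blast
  moreover have "f (y - x) > 0" using fpos xy(3) by blast
  ultimately show "f x < f y" by simp
qed

lemma superadd_mult:
  assumes s: "superadditive_on {0..} f" and x: "x \<ge> 0"
  shows "real n * f x \<le> f (real n * x)"
proof (induction n)
  case 0 then show ?case by simp
next
  case (Suc n)
  have "f (real n * x) + f x \<le> f (real n * x + x)"
    using s x unfolding superadditive_on_def by auto
  thus ?case using Suc by (simp add: algebra_simps)
qed

lemma superadd_small:
  assumes s: "superadditive_on {0..} f" and d: "d > 0" and eta: "\<eta> > 0"
  shows "\<exists>u. 0 < u \<and> u < d \<and> f u < \<eta>"
proof -
  obtain n :: nat where n: "f d / \<eta> < real n" using reals_Archimedean2 by blast
  define N where "N = n + 2"
  have N: "real N \<ge> 2" "f d / \<eta> < real N" using n unfolding N_def by auto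
  have "real N * f (d / real N) \<le> f (real N * (d / real N))"
    by (rule superadd_mult[OF s]) (use d N in auto)
  hence "real N * f (d / real N) \<le> f d" using N by simp
  moreover have "f d < real N * \<eta>" using N(2) eta by (simp add: pos_divide_less_eq)
  ultimately have "real N * f (d / real N) < real N * \<eta>" by linarith
  hence "f (d / real N) < \<eta>" using N by (simp add: mult_less_cancel_left_pos)
  moreover have "0 < d / real N" using d N by simp
  moreover have "d / real N < d" using d N by (simp add: pos_divide_less_eq)
  ultimately show ?thesis by blast
qed

end



context cs begin

lemma norm_se: "norm e = 1 \<Longrightarrow> norm (a *\<^sub>R e - b *\<^sub>R e) = \<bar>a - b\<bar>"
  by (metis mult.right_neutral norm_scaleR scaleR_diff_left)

lemma mono_lsc:
  assumes e: "norm e = 1" "inner e h = 0" and m: "mono_on {0..} f"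
  shows "lsc_on {0..} f"
  unfolding lsc_on_def
proof (intro ballI allI impI)
  have sa: "superadditive_on {0..} f" by (rule mono_superadd[OF e m])
  have sm: "strict_mono_on {0..} f" by (rule superadd_strict[OF sa])
  fix x0 c assume x0: "x0 \<in> {0..}" and c: "c < f x0"
  show "\<forall>\<^sub>F y in at x0 within {0..}. c < f y"
  proof (rule ccontr)
    assume "\<not> ?thesis"
    hence ne: "\<And>d. d > 0 \<Longrightarrow> \<exists>x\<in>{0..}. x \<noteq> x0 \<and> dist x x0 < d \<and> \<not> c < f x"
      unfolding eventually_at by blast
    have below: "f y0 \<le> c" if y0: "0 \<le> y0" "y0 < x0" for y0
    proof -
      obtain y where y: "y \<in> {0..}" "y \<noteq> x0" "dist y x0 < x0 - y0" "\<not> c < f y"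
        using ne[of "x0 - y0"] y0 by auto
      have "y < x0"
      proof (rule ccontr)
        assume "\<not> y < x0"
        hence "f x0 \<le> f y" using m x0 y(1) by (intro mono_onD[OF m]) auto
        thus False using c y(4) by linarith
      qed
      hence "y0 \<le> y" using y(3) by (simp add: dist_real_def)
      hence "f y0 \<le> f y" using m y0 by (intro mono_onD[OF m]) auto
      thus ?thesis using y(4) by linarith
    qed
    obtain y1 where "y1 \<in> {0..}" "\<not> c < f y1" using ne[of 1] by auto
    hence "f y1 \<ge> 0" "\<not> c < f y1" by auto
    hence "c \<ge> 0" by linarith
    hence x0pos: "x0 > 0" using c x0 by (cases "x0 = 0") auto
    define \<tau> where "\<tau> = (c + f x0) / 2"
    define \<eta> where "\<eta> = (f x0 - c) / 2"
    have eta: "\<eta> > 0" using c unfolding \<eta>_def by simp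
    have tau_eta: "\<tau> + \<eta> = f x0" unfolding \<eta>_def \<tau>_def by (simp add: field_simps)
    have ctau: "c < \<tau>" using c unfolding \<tau>_def by simp
    obtain u where u: "0 < u" "u < x0" "f u < \<eta>" using superadd_small[OF sa x0pos eta] by blast
    have eo: "\<And>a. inner (a *\<^sub>R e) h = 0" using e by simp
    define y where "y = \<tau> *\<^sub>R h + x0 *\<^sub>R e"
    define w where "w = (f x0 + \<bar>\<tau>\<bar>) *\<^sub>R h + x0 *\<^sub>R e"
    have fx0: "f x0 \<ge> 0" using x0 by simp
    have "R 0 w" unfolding Rdef w_def using eo e x0 by simp
    moreover have "R y w" unfolding Rdef w_def y_def using eo e fx0 by (simp add: abs_ge_self add_increasing)
    ultimately have "\<forall>p\<in>{0, y}. R p w" by blast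
    then obtain z where z: "is_join R {0, y} z" using join_ex[of "{0, y}" w] by auto
    define cz where "cz = perp h z"
    define t where "t = hcomp h z"
    have R0z: "f (norm cz) \<le> t" using z unfolding is_join_def Rdef cz_def t_def by simp
    have Ryz: "f (norm (cz - x0 *\<^sub>R e)) \<le> t - \<tau>" using z eo unfolding is_join_def Rdef cz_def t_def y_def by simp
    have Rzw: "f (norm (p *\<^sub>R e - cz)) \<le> \<tau> + f (x0 - p) - t" if p: "0 < p" "p < x0" for p
    proof -
      define wp where "wp = (\<tau> + f (x0 - p)) *\<^sub>R h + p *\<^sub>R e"
      have "f p \<le> c" using below p by auto
      moreover have "f (x0 - p) \<ge> 0" using p fnn[of "x0 - p"] by auto
      ultimately have fp: "f p \<le> \<tau> + f (x0 - p)" using ctau by linarith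
      have "R 0 wp" unfolding Rdef wp_def using eo e p fp by simp
      moreover have "R y wp" unfolding Rdef wp_def y_def using eo e p by (simp add: norm_se)
      ultimately have "R z wp" using z unfolding is_join_def by blast
      thus ?thesis unfolding Rdef wp_def cz_def t_def using eo by simp
    qed
    have key: "f (norm (cz - x0 *\<^sub>R e)) \<le> f (x0 - p)" if p: "0 < p" "p < x0" for p
      using Rzw[OF p] Ryz fnorm[of "p *\<^sub>R e - cz"] by linarith
    have "norm (cz - x0 *\<^sub>R e) = 0"
    proof (rule ccontr)
      define v where "v = norm (cz - x0 *\<^sub>R e)"
      assume "\<not> ?thesis"
      hence v: "v > 0" unfolding v_def by simp
      define u' where "u' = min v x0 / 2"
      have u': "0 < u'" "u' < v" "u' < x0" using v x0pos unfolding u'_def by auto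
      have "f v \<le> f (x0 - (x0 - u'))" unfolding v_def by (rule key) (use u' in auto)
      moreover have "f u' < f v" using sm u' by (intro strict_mono_onD[OF sm]) auto
      ultimately show False by simp
    qed
    hence czx: "cz = x0 *\<^sub>R e" by simp
    have "f x0 \<le> t" using R0z czx e x0 by simp
    moreover have "t \<le> \<tau> + f u"
    proof -
      have "f (norm ((x0 - u) *\<^sub>R e - cz)) \<le> \<tau> + f u - t" using Rzw[of "x0 - u"] u by simp
      moreover have "f (norm ((x0 - u) *\<^sub>R e - cz)) \<ge> 0" by (rule fnorm)
      ultimately show ?thesis by linarith
    qed
    ultimately show False using u(3) tau_eta by linarith
  qed
qed

end



context cs begin

lemma lsc_pos:
  assumes l: "lsc_on {0..} f" and d: "\<delta> > 0"
  shows "\<exists>\<mu>>0. \<forall>x. \<delta> \<le> x \<and> x \<le> 2 * \<delta> \<longrightarrow> \<mu> \<le> f x"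
proof -
  define K where "K = {\<delta>..2 * \<delta>}"
  have loc: "\<exists>D>0. \<forall>y. 0 \<le> y \<and> dist y x < D \<longrightarrow> f x / 2 < f y" if x: "x \<in> K" for x
  proof -
    have xp: "x > 0" using x d unfolding K_def by auto
    hence fx: "f x > 0" by (rule fpos)
    have "f x / 2 < f x" using fx by simp
    hence "\<forall>\<^sub>F y in at x within {0..}. f x / 2 < f y"
      using l xp unfolding lsc_on_def by (meson atLeast_iff less_imp_le)
    then obtain D where D: "D > 0" "\<forall>y\<in>{0..}. y \<noteq> x \<and> dist y x < D \<longrightarrow> f x / 2 < f y"
      unfolding eventually_at by blast
    have "\<forall>y. 0 \<le> y \<and> dist y x < D \<longrightarrow> f x / 2 < f y"
    proof (intro allI impI)
      fix y assume y: "0 \<le> y \<and> dist y x < D"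
      show "f x / 2 < f y"
      proof (cases "y = x")
        case True thus ?thesis using fx by simp
      next
        case False thus ?thesis using D y by auto
      qed
    qed
    thus ?thesis using D(1) by blast
  qed
  then obtain D where D: "\<And>x. x \<in> K \<Longrightarrow> D x > 0 \<and> (\<forall>y. 0 \<le> y \<and> dist y x < D x \<longrightarrow> f x / 2 < f y)"
    by metis
  have cK: "compact K" unfolding K_def by simp
  have cov: "K \<subseteq> (\<Union>x\<in>K. ball x (D x))"
    using D by (auto intro!: bexI)
  obtain C where C: "C \<subseteq> K" "finite C" "K \<subseteq> (\<Union>x\<in>C. ball x (D x))"
    using compactE_image[OF cK _ cov] by auto
  have "\<delta> \<in> K" using d unfolding K_def by auto
  hence Cne: "C \<noteq> {}" using C(3) by auto
  define \<mu> where "\<mu> = Min ((\<lambda>x. f x / 2) ` C)"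
  have "\<mu> \<in> (\<lambda>x. f x / 2) ` C" unfolding \<mu>_def using C(2) Cne by (intro Min_in) auto
  then obtain x0 where x0: "x0 \<in> C" "\<mu> = f x0 / 2" by blast
  have "x0 > 0" using x0 C(1) d unfolding K_def by auto
  hence "f x0 > 0" by (rule fpos)
  hence mpos: "\<mu> > 0" using x0(2) by simp
  have "\<mu> \<le> f x" if x: "\<delta> \<le> x" "x \<le> 2 * \<delta>" for x
  proof -
    have "x \<in> K" using x unfolding K_def by auto
    then obtain y where y: "y \<in> C" "x \<in> ball y (D y)" using C(3) by blast
    have "f y / 2 < f x" using D[of y] y C(1) x d by (auto simp: dist_commute)
    moreover have "\<mu> \<le> f y / 2" unfolding \<mu>_def using C(2) y(1) by (intro Min_le) auto
    ultimately show ?thesis by linarith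
  qed
  thus ?thesis using mpos by blast
qed

lemma lsc_bound:
  assumes e: "norm e = 1" "inner e h = 0" and l: "lsc_on {0..} f" and d: "\<delta> > 0"
  shows "\<exists>\<mu>>0. \<forall>x. \<delta> \<le> x \<longrightarrow> \<mu> \<le> f x"
proof -
  obtain \<mu> where mu: "\<mu> > 0" "\<And>x. \<delta> \<le> x \<Longrightarrow> x \<le> 2 * \<delta> \<Longrightarrow> \<mu> \<le> f x"
    using lsc_pos[OF l d] by blast
  have ind: "\<forall>x. \<delta> \<le> x \<and> x \<le> 2 ^ (Suc n) * \<delta> \<longrightarrow> \<mu> \<le> f x" for n
  proof (induction n)
    case 0 thus ?case using mu by auto
  next
    case (Suc n)
    show ?case
    proof (intro allI impI)
      fix x assume x: "\<delta> \<le> x \<and> x \<le> 2 ^ Suc (Suc n) * \<delta>"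
      show "\<mu> \<le> f x"
      proof (cases "x \<le> 2 * \<delta>")
        case True thus ?thesis using mu x by auto
      next
        case False
        hence "\<delta> \<le> x / 2" "x / 2 \<le> 2 ^ Suc n * \<delta>" using x by auto
        hence "\<mu> \<le> f (x / 2)" using Suc by blast
        moreover have "2 * f (x / 2) \<le> f (2 * (x / 2))" by (rule doubling[OF e]) (use x d in auto)
        moreover have "f (x / 2) \<ge> 0" using x d by simp
        ultimately show ?thesis by simp
      qed
    qed
  qed
  have "\<mu> \<le> f x" if x: "\<delta> \<le> x" for x
  proof -
    obtain n where n: "x / \<delta> < 2 ^ n" using real_arch_pow[of 2 "x / \<delta>"] by auto
    have "x < 2 ^ n * \<delta>" using n d by (simp add: divide_less_eq)
    moreover have "2 ^ n * \<delta> \<le> 2 ^ Suc n * \<delta>" using d by simp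
    ultimately have "x \<le> 2 ^ Suc n * \<delta>" by linarith
    thus ?thesis using ind[of n] x by blast
  qed
  thus ?thesis using mu(1) by blast
qed

lemma perp_shift[simp]: "perp h (x + s *\<^sub>R h) = perp h x"
  by (simp add: perp_def inner_add_left hh algebra_simps)
lemma hc_shift[simp]: "hcomp h (x + s *\<^sub>R h) = hcomp h x + s"
  by (simp add: hcomp_def inner_add_left hh)

lemma antisymR: "R x y \<Longrightarrow> R y x \<Longrightarrow> x = y"
proof -
  have "\<forall>x y. R x y \<and> R y x \<longrightarrow> x = y" using spg unfolding sponge_def by (metis (no_types))
  thus "R x y \<Longrightarrow> R y x \<Longrightarrow> x = y" by blast
qed
lemma reflR: "R x x"
proof -
  have "\<forall>x. R x x" using spg unfolding sponge_def by (rule conjunct1)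
  thus ?thesis by blast
qed

end



context cs begin

lemma lsc_mono:
  assumes e: "norm e = 1" "inner e h = 0" and l: "lsc_on {0..} f"
  shows "mono_on {0..} f"
proof (rule mono_onI)
  fix a b :: real assume ab: "a \<in> {0..}" "b \<in> {0..}" "a \<le> b"
  show "f a \<le> f b"
  proof (cases "a = 0 \<or> a = b")
    case True thus ?thesis using ab by auto
  next
    case False
    hence a: "0 < a" "a < b" using ab by auto
    have fb: "f b > 0" using a by (intro fpos) auto
    have eo: "\<And>s. inner (s *\<^sub>R e) h = 0" using e by simp
    define Y where "Y \<tau> = \<tau> *\<^sub>R h + b *\<^sub>R e" for \<tau>
    have hY[simp]: "hcomp h (Y \<tau>) = \<tau>" "perp h (Y \<tau>) = b *\<^sub>R e" for \<tau>
      unfolding Y_def using eo by auto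
    have nbe: "norm (b *\<^sub>R e) = b" using a e by simp
    have exj: "\<exists>z. is_join R {0, Y \<tau>} z" for \<tau>
    proof -
      define w where "w = (f b + \<bar>\<tau>\<bar>) *\<^sub>R h + b *\<^sub>R e"
      have hw: "hcomp h w = f b + \<bar>\<tau>\<bar>" "perp h w = b *\<^sub>R e" unfolding w_def using eo by auto
      have "R 0 w" unfolding Rdef hw using nbe by simp
      moreover have "R (Y \<tau>) w" unfolding Rdef hw using fb by (simp add: abs_ge_self add_increasing)
      ultimately show ?thesis using join_ex[of "{0, Y \<tau>}" w] by auto
    qed
    define Z where "Z \<tau> = (SOME z. is_join R {0, Y \<tau>} z)" for \<tau>
    have Zj: "is_join R {0, Y \<tau>} (Z \<tau>)" for \<tau>
      unfolding Z_def using exj by (rule someI_ex)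
    have Z0: "R 0 (Z \<tau>)" and ZY: "R (Y \<tau>) (Z \<tau>)" and Zl: "\<And>w. R 0 w \<Longrightarrow> R (Y \<tau>) w \<Longrightarrow> R (Z \<tau>) w" for \<tau>
      using Zj[of \<tau>] unfolding is_join_def by auto
    define P where "P \<tau> = perp h (Z \<tau>)" for \<tau>
    define T where "T \<tau> = hcomp h (Z \<tau>)" for \<tau>
    have J1: "f (norm (P \<tau>)) + f (norm (b *\<^sub>R e - P \<tau>)) \<le> f b" if t: "\<tau> \<le> f b" for \<tau>
    proof -
      define w where "w = f b *\<^sub>R h + b *\<^sub>R e"
      have hw: "hcomp h w = f b" "perp h w = b *\<^sub>R e" unfolding w_def using eo by auto
      have "R 0 w" unfolding Rdef hw using nbe by simp
      moreover have "R (Y \<tau>) w" unfolding Rdef hw using t by simp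
      ultimately have "R (Z \<tau>) w" by (rule Zl)
      hence "f (norm (b *\<^sub>R e - P \<tau>)) \<le> f b - T \<tau>" unfolding Rdef hw P_def T_def .
      moreover have "f (norm (P \<tau>)) \<le> T \<tau>" using Z0[of \<tau>] unfolding Rdef P_def T_def by simp
      ultimately show ?thesis by linarith
    qed
    have J2: "f (norm (P \<tau>2 - P \<tau>1)) \<le> \<tau>2 - \<tau>1" if t: "\<tau>1 \<le> \<tau>2" for \<tau>1 \<tau>2
    proof -
      have "f (norm (P \<tau>2 - b *\<^sub>R e)) \<le> T \<tau>2 - \<tau>2" using ZY[of \<tau>2] unfolding Rdef P_def T_def by simp
      hence "R (Y \<tau>1) (Z \<tau>2)" unfolding Rdef P_def T_def using t by simp
      hence "R (Z \<tau>1) (Z \<tau>2)" using Z0 Zl by blast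
      hence A: "f (norm (P \<tau>2 - P \<tau>1)) \<le> T \<tau>2 - T \<tau>1" unfolding Rdef P_def T_def .
      define w where "w = Z \<tau>1 + (\<tau>2 - \<tau>1) *\<^sub>R h"
      have hw: "hcomp h w = T \<tau>1 + (\<tau>2 - \<tau>1)" "perp h w = P \<tau>1" unfolding w_def P_def T_def by auto
      have "f (norm (P \<tau>1)) \<le> T \<tau>1" using Z0[of \<tau>1] unfolding Rdef P_def T_def by simp
      hence "R 0 w" unfolding Rdef hw using t by simp
      moreover have "f (norm (P \<tau>1 - b *\<^sub>R e)) \<le> T \<tau>1 - \<tau>1" using ZY[of \<tau>1] unfolding Rdef P_def T_def by simp
      hence "R (Y \<tau>2) w" unfolding Rdef hw by simp
      ultimately have "R (Z \<tau>2) w" by (rule Zl)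
      hence "f (norm (P \<tau>1 - P \<tau>2)) \<le> T \<tau>1 + (\<tau>2 - \<tau>1) - T \<tau>2" unfolding Rdef hw P_def T_def .
      moreover have "f (norm (P \<tau>1 - P \<tau>2)) \<ge> 0" by (rule fnorm)
      ultimately show ?thesis using A by linarith
    qed
    have J3a: "norm (P (- f b)) = 0"
    proof -
      have "R (Y (- f b)) 0" unfolding Rdef using nbe by simp
      hence "R (Z (- f b)) 0" using Zl reflR by blast
      hence "Z (- f b) = 0" using Z0 antisymR by blast
      thus ?thesis unfolding P_def by simp
    qed
    have J3b: "norm (P (f b)) = b"
    proof -
      have "R 0 (Y (f b))" unfolding Rdef using nbe by simp
      hence "R (Z (f b)) (Y (f b))" using Zl reflR by blast
      hence "Z (f b) = Y (f b)" using ZY antisymR by blast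
      thus ?thesis unfolding P_def using nbe by simp
    qed
    define g where "g \<tau> = norm (P \<tau>)" for \<tau>
    have cont: "continuous_on {- f b .. f b} g"
      unfolding continuous_on_iff
    proof (intro ballI allI impI)
      fix x \<epsilon> :: real assume "x \<in> {- f b .. f b}" "\<epsilon> > 0"
      obtain \<mu> where mu: "\<mu> > 0" "\<And>d. \<epsilon> \<le> d \<Longrightarrow> \<mu> \<le> f d"
        using lsc_bound[OF e l \<open>\<epsilon> > 0\<close>] by blast
      show "\<exists>d>0. \<forall>x'\<in>{- f b .. f b}. dist x' x < d \<longrightarrow> dist (g x') (g x) < \<epsilon>"
      proof (intro exI[of _ \<mu>] conjI ballI impI)
        show "\<mu> > 0" by fact
        fix x' assume "x' \<in> {- f b .. f b}" "dist x' x < \<mu>"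
        hence dx: "\<bar>x' - x\<bar> < \<mu>" by (simp add: dist_real_def)
        show "dist (g x') (g x) < \<epsilon>"
        proof (rule ccontr)
          assume "\<not> ?thesis"
          hence "\<epsilon> \<le> \<bar>norm (P x') - norm (P x)\<bar>" unfolding g_def dist_real_def by simp
          also have "\<dots> \<le> norm (P x' - P x)" by (rule norm_triangle_ineq3)
          finally have "\<mu> \<le> f (norm (P x' - P x))" by (rule mu(2))
          moreover have "f (norm (P x' - P x)) \<le> \<bar>x' - x\<bar>"
          proof (cases "x \<le> x'")
            case True thus ?thesis using J2[OF True] by simp
          next
            case False
            hence "f (norm (P x - P x')) \<le> x - x'" using J2[of x' x] by simp
            thus ?thesis using False by (simp add: norm_minus_commute)
          qed
          ultimately show False using dx by linarith
        qed
      qed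
    qed
    have "g (- f b) \<le> a" "a \<le> g (f b)" "- f b \<le> f b"
      using J3a J3b a fb unfolding g_def by auto
    then obtain \<tau> where tau: "- f b \<le> \<tau>" "\<tau> \<le> f b" "g \<tau> = a"
      using IVT'[of g "- f b" a "f b", OF _ _ _ cont] by blast
    have "f (norm (P \<tau>)) + f (norm (b *\<^sub>R e - P \<tau>)) \<le> f b" by (rule J1[OF tau(2)])
    moreover have "f (norm (b *\<^sub>R e - P \<tau>)) \<ge> 0" by (rule fnorm)
    moreover have "norm (P \<tau>) = a" using tau(3) unfolding g_def .
    ultimately have "f a + f (norm (b *\<^sub>R e - P \<tau>)) \<le> f b" by simp
    moreover have "f (norm (b *\<^sub>R e - P \<tau>)) \<ge> 0" by (rule fnorm)
    ultimately show ?thesis by linarith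
  qed
qed

end



context cs begin

lemma perp_diff: "perp h (u - v) = perp h u - perp h v"
  unfolding perp_def inner_diff_left scaleR_diff_left by simp
lemma hc_diff: "hcomp h (u - v) = hcomp h u - hcomp h v"
  by (simp add: hcomp_def inner_diff_left)
lemma hc_le: "\<bar>hcomp h v\<bar> \<le> norm v"
  using Cauchy_Schwarz_ineq2[of v h] unit by (simp add: hcomp_def)
lemma perp_le: "norm (perp h v) \<le> norm v"
proof -
  define a where "a = inner v h"
  have p: "perp h v = v - a *\<^sub>R h" unfolding perp_def a_def ..
  have o: "inner (perp h v) h = 0" by (rule perp_orth)
  have "inner (perp h v) (perp h v) = inner (perp h v) v - a * inner (perp h v) h"
    by (subst (2) p) (simp only: inner_diff_right inner_scaleR_right)
  also have "\<dots> = inner (perp h v) v" using o by simp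
  also have "\<dots> = inner v v - a * inner h v" unfolding p by (simp only: inner_diff_left inner_scaleR_left)
  also have "\<dots> = inner v v - a * a" unfolding a_def by (simp only: inner_commute)
  finally have "inner (perp h v) (perp h v) \<le> inner v v" by simp
  hence "(norm (perp h v))\<^sup>2 \<le> (norm v)\<^sup>2" by (simp only: power2_norm_eq_inner)
  thus ?thesis by (rule power2_le_imp_le) simp
qed

lemma closed_lsc:
  assumes e: "norm e = 1" "inner e h = 0" and cl: "closed {(x, y). R x y}"
  shows "lsc_on {0..} f"
  unfolding lsc_on_def
proof (intro ballI allI impI)
  fix x0 c assume x0: "x0 \<in> {0..}" and c: "c < f x0"
  have eo: "\<And>s. inner (s *\<^sub>R e) h = 0" using e by simp
  define Q where "Q = (0::'a, c *\<^sub>R h + x0 *\<^sub>R e)"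
  have "Q \<in> - {(x, y). R x y}" unfolding Q_def Rdef using eo e x0 c by auto
  moreover have "open (- {(x, y). R x y})" using cl by (simp add: open_Compl)
  ultimately obtain \<epsilon> where eps: "\<epsilon> > 0" "\<And>q. dist q Q < \<epsilon> \<Longrightarrow> q \<in> - {(x, y). R x y}"
    unfolding open_dist by blast
  show "\<forall>\<^sub>F y in at x0 within {0..}. c < f y"
    unfolding eventually_at
  proof (intro exI[of _ \<epsilon>] conjI ballI impI)
    show "\<epsilon> > 0" by fact
    fix y assume y: "y \<in> {0..}" "y \<noteq> x0 \<and> dist y x0 < \<epsilon>"
    have "dist (0::'a, c *\<^sub>R h + y *\<^sub>R e) Q = norm (y *\<^sub>R e - x0 *\<^sub>R e)"
      unfolding Q_def by (simp add: dist_Pair_Pair dist_norm)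
    also have "\<dots> = \<bar>y - x0\<bar>" using e(1) by (rule norm_se)
    finally have "dist (0::'a, c *\<^sub>R h + y *\<^sub>R e) Q < \<epsilon>" using y by (simp add: dist_real_def)
    hence "\<not> R 0 (c *\<^sub>R h + y *\<^sub>R e)" using eps(2) by blast
    thus "c < f y" unfolding Rdef using eo e y by auto
  qed
qed

lemma lsc_closed:
  assumes l: "lsc_on {0..} f"
  shows "closed {(x, y). R x y}"
  unfolding closed_def open_dist
proof (intro ballI)
  fix pq assume "pq \<in> - {(x, y). R x y}"
  then obtain x y where pq: "pq = (x, y)" and nR: "\<not> R x y" by auto
  define D where "D = norm (perp h y - perp h x)"
  define T where "T = hcomp h y - hcomp h x"
  have TD: "T < f D" using nR unfolding Rdef D_def T_def by simp
  define c where "c = (T + f D) / 2"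
  have cD: "c < f D" using TD unfolding c_def by simp
  have Tc: "T < c" using TD unfolding c_def by simp
  have "\<forall>\<^sub>F y in at D within {0..}. c < f y" using l cD unfolding lsc_on_def D_def by auto
  then obtain d where d: "d > 0" "\<And>y. y \<in> {0..} \<Longrightarrow> y \<noteq> D \<and> dist y D < d \<Longrightarrow> c < f y"
    unfolding eventually_at by blast
  define \<epsilon> where "\<epsilon> = min d (c - T) / 2"
  have eps: "\<epsilon> > 0" "2 * \<epsilon> \<le> d" "2 * \<epsilon> \<le> c - T" using d Tc unfolding \<epsilon>_def by auto
  show "\<exists>e>0. \<forall>q. dist q pq < e \<longrightarrow> q \<in> - {(x, y). R x y}"
  proof (intro exI[of _ \<epsilon>] conjI allI impI)
    show "\<epsilon> > 0" by fact
    fix q assume q: "dist q pq < \<epsilon>"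
    obtain x' y' where q': "q = (x', y')" by fastforce
    have dx: "norm (x' - x) < \<epsilon>" and dy: "norm (y' - y) < \<epsilon>"
      using q dist_fst_le[of q pq] dist_snd_le[of q pq] unfolding q' pq by (auto simp: dist_norm)
    define D' where "D' = norm (perp h y' - perp h x')"
    define T' where "T' = hcomp h y' - hcomp h x'"
    have "(perp h y' - perp h x') - (perp h y - perp h x) = perp h (y' - y) - perp h (x' - x)"
      by (simp add: perp_diff)
    hence "\<bar>D' - D\<bar> \<le> norm (perp h (y' - y) - perp h (x' - x))"
      unfolding D'_def D_def by (metis norm_triangle_ineq3)
    also have "\<dots> \<le> norm (perp h (y' - y)) + norm (perp h (x' - x))" by (rule norm_triangle_ineq4)
    also have "\<dots> \<le> norm (y' - y) + norm (x' - x)" using perp_le by (intro add_mono) auto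
    finally have "\<bar>D' - D\<bar> < d" using dx dy eps by linarith
    moreover have "D' \<ge> 0" unfolding D'_def by simp
    ultimately have fD': "c < f D'" using d(2)[of D'] cD by (cases "D' = D") (auto simp: dist_real_def)
    have "T' - T = hcomp h (y' - y) - hcomp h (x' - x)" unfolding T'_def T_def hc_diff by simp
    also have "\<dots> \<le> norm (y' - y) + norm (x' - x)" using hc_le[of "y' - y"] hc_le[of "x' - x"] by linarith
    finally have "T' < c" using dx dy eps by linarith
    hence "\<not> R x' y'" using fD' unfolding Rdef D'_def[symmetric] T'_def[symmetric] by linarith
    thus "q \<in> - {(x, y). R x y}" unfolding q' by simp
  qed
qed

lemma dim3_mono:
  assumes e: "norm e1 = 1" "norm e2 = 1" "inner e1 h = 0" "inner e2 h = 0" "inner e1 e2 = 0"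
  shows "mono_on {0..} f"
proof (rule mono_onI)
  fix x y :: real assume xy: "x \<in> {0..}" "y \<in> {0..}" "x \<le> y"
  have x0: "0 \<le> x" and y0: "0 \<le> y" using xy by auto
  define u where "u = sqrt (y\<^sup>2 - x\<^sup>2)"
  have "x\<^sup>2 \<le> y\<^sup>2" by (rule power_mono[OF xy(3) x0])
  hence d0: "0 \<le> y\<^sup>2 - x\<^sup>2" by linarith
  have u0: "u \<ge> 0" unfolding u_def by (rule real_sqrt_ge_zero[OF d0])
  have u2: "u\<^sup>2 = y\<^sup>2 - x\<^sup>2" unfolding u_def by (rule real_sqrt_pow2[OF d0])
  have "x\<^sup>2 + u\<^sup>2 = y\<^sup>2" using u2 by linarith
  hence sq: "sqrt (x\<^sup>2 + u\<^sup>2) = y" using y0 by (metis real_sqrt_abs abs_of_nonneg)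
  have "f x + f u \<le> f (sqrt (x\<^sup>2 + u\<^sup>2))" by (rule FA_orth[OF e x0 u0])
  hence "f x + f u \<le> f y" unfolding sq .
  moreover have "f u \<ge> 0" using fnn[OF u0] .
  ultimately show "f x \<le> f y" by linarith
qed

end


theorem mainTheorem16:
  fixes h :: "'a::{real_inner, complete_space}"
    and f :: "real \<Rightarrow> real"
  assumes dim2: "dim_at_least 2 TYPE('a)"
    and unit: "norm h = 1"
    and f_nonneg: "\<forall>d\<ge>0. f d \<ge> 0"
    and f_zero: "\<forall>d\<ge>0. f d = 0 \<longleftrightarrow> d = 0"
    and spg: "sponge (cone_rel f h)"
  shows "(closed {(x, y). cone_rel f h x y} \<longleftrightarrow> lsc_on {0..} f)
       \<and> (lsc_on {0..} f \<longleftrightarrow> mono_on {0..} f)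
       \<and> (mono_on {0..} f \<longleftrightarrow> strict_mono_on {0..} f)
       \<and> (strict_mono_on {0..} f \<longleftrightarrow> superadditive_on {0..} f)
       \<and> (dim_at_least 3 TYPE('a) \<longrightarrow>
            closed {(x, y). cone_rel f h x y} \<and> lsc_on {0..} f \<and> mono_on {0..} f
            \<and> strict_mono_on {0..} f \<and> superadditive_on {0..} f)"
proof -
  interpret cs h f using unit f_nonneg f_zero spg by unfold_locales
  obtain e where e: "norm e = 1" "inner e h = 0" using orth1[OF dim2] by blast
  have cl: "closed {(x, y). cone_rel f h x y} \<longleftrightarrow> lsc_on {0..} f"
    using closed_lsc[OF e] lsc_closed by blast
  have lm: "lsc_on {0..} f \<longleftrightarrow> mono_on {0..} f"
    using mono_lsc[OF e] lsc_mono[OF e] by blast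
  have ms: "mono_on {0..} f \<longleftrightarrow> strict_mono_on {0..} f"
    using strict_mono_on_imp_mono_on mono_superadd[OF e] superadd_strict by blast
  have ss: "strict_mono_on {0..} f \<longleftrightarrow> superadditive_on {0..} f"
    using strict_mono_on_imp_mono_on mono_superadd[OF e] superadd_strict by blast
  have d3: "mono_on {0..} f" if d: "dim_at_least 3 TYPE('a)"
  proof -
    obtain e1 e2 :: 'a where "norm e1 = 1" "norm e2 = 1" "inner e1 h = 0" "inner e2 h = 0" "inner e1 e2 = 0"
      using orth2[OF d, of h] by blast
    thus ?thesis by (rule dim3_mono)
  qed
  show ?thesis using cl lm ms ss d3 by blast
qed

end
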